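(* Let $v,a,b,c\in\mathbb{C}$ with $\Re(v)<1$, $\Re(c)>0$, and $\Re(vc+a+b)>0$, $\Re(vc+a-b)>0$, $\Re(vc-a+b)>0$, $\Re(vc-a-b)>0$. Fix a square root $\sqrt{a^2+b^2}$ and put $\lambda_1=\frac v2-\frac{\sqrt{a^2+b^2}}{2c}$, $\lambda_2=\frac v2+\frac{\sqrt{a^2+b^2}}{2c}$, $\sigma_3=\frac v2-\frac{a}{2c}-\frac{b}{2c}$, $\sigma_4=\frac v2-\frac{a}{2c}+\frac{b}{2c}$, $\sigma_5=\frac v2+\frac{a}{2c}+\frac{b}{2c}$, $\sigma_6=\frac v2+\frac{a}{2c}-\frac{b}{2c}$, $P=(vc-a-b)(vc+a+b)(vc-a+b)(vc+a-b)$; assume $\frac v2,\lambda_1,\lambda_2\notin\mathbb{Z}_0^-$ and $1+\sigma_j\notin\mathbb{Z}_0^-$ ($j=3,4,5,6$). Then $$ \int_0^\infty\frac{\cosh(ax)\cosh(bx)}{\sinh^{v}(cx)}\,dx=\frac{2^{v}(v^3c^3-a^2vc-b^2vc)}{P}\;{}_8F_7\!\left(\begin{matrix}v,\ 1+\frac v2,\ 1+\lambda_1,\ 1+\lambda_2,\ \sigma_3,\ \sigma_4,\ \sigma_5,\ \sigma_6\\ \frac v2,\ \lambda_1,\ \lambda_2,\ 1+\sigma_3,\ 1+\sigma_4,\ 1+\sigma_5,\ 1+\sigma_6\end{matrix};\,1\right). $$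
   Context: $\mathbb{Z}_0^-=\{0,-1,-2,\dots\}$. The Pochhammer symbol is $(\lambda)_0=1$, $(\lambda)_n=\lambda(\lambda+1)\cdots(\lambda+n-1)$ for $n\ge1$. The generalized hypergeometric series is ${}_pF_q\!\left(\begin{matrix}\alpha_1,\dots,\alpha_p\\ \beta_1,\dots,\beta_q\end{matrix};z\right)=\sum_{n=0}^\infty\frac{(\alpha_1)_n\cdots(\alpha_p)_n}{(\beta_1)_n\cdots(\beta_q)_n}\frac{z^n}{n!}$ (with no $\beta_j\in\mathbb{Z}_0^-$); when $p=q+1$ and $z=1$ it converges if $\Re(\sum\beta_j-\sum\alpha_i)>0$. For $\Re(c)>0$ and $x>0$, the complex power $\sinh^{v}(cx)$ means $2^{-v}e^{vcx}(1-e^{-2cx})^{v}$, with the principal branch of $(1-e^{-2cx})^{v}$ (this agrees with the ordinary real power when $c>0$ and $v$ is real). *)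

theory Defs
  imports "HOL-Analysis.Analysis"
begin

definition hyp_term :: "complex list \<Rightarrow> complex list \<Rightarrow> complex \<Rightarrow> nat \<Rightarrow> complex" where
  "hyp_term as bs z n =
     prod_list (map (\<lambda>a. pochhammer a n) as) / prod_list (map (\<lambda>b. pochhammer b n) bs)
       * z ^ n / of_nat (fact n)"

definition hypergeomF :: "complex list \<Rightarrow> complex list \<Rightarrow> complex \<Rightarrow> complex" where
  "hypergeomF as bs z = (\<Sum>n. hyp_term as bs z n)"

text \<open>Complex power sinh^v(c x) := 2^(-v) e^(v c x) (1 - e^(-2 c x))^v, principal branch.\<close>
definition sinh_pow :: "complex \<Rightarrow> complex \<Rightarrow> real \<Rightarrow> complex" where
  "sinh_pow v c x = (2::complex) powr (-v) * exp (v * c * of_real x)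
                      * (1 - exp (-2 * c * of_real x)) powr v"

end

theory Submission
  imports Defs
begin

lemma Ici_Ioi_has_integral:
  fixes f :: "real \<Rightarrow> 'a::banach"
  shows "(f has_integral y) {0..} \<longleftrightarrow> (f has_integral y) {0<..}"
  by (rule has_integral_spike_set_eq; rule negligible_subset[OF negligible_sing[of 0]]) auto

lemma Icc_Ioc_has_integral:
  fixes f :: "real \<Rightarrow> 'a::banach"
  shows "(f has_integral y) {0..T} \<longleftrightarrow> (f has_integral y) {0<..T}"
  by (rule has_integral_spike_set_eq; rule negligible_subset[OF negligible_sing[of 0]]) auto

lemma exp_real_integral:
  fixes r :: real assumes "r > 0"
  shows "((\<lambda>x. exp (-(r*x))) has_integral 1/r) {0<..}"
proof -
  have "((\<lambda>x::real. exp (-r*x)) has_integral exp(-r*0)/r) {0..}"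
    by (rule has_integral_exp_minus_to_infinity[OF assms])
  then show ?thesis by (simp add: Ici_Ioi_has_integral)
qed

lemma exp_complex_integral_finite:
  fixes w :: complex and T :: real assumes "w \<noteq> 0" "T \<ge> 0"
  shows "((\<lambda>x::real. exp (-(w * of_real x))) has_integral (1 - exp (-(w * of_real T)))/w) {0<..T}"
proof -
  have "\<And>t. t \<in> {0..T} \<Longrightarrow> ((\<lambda>x. - exp (-(w * x)) / w) has_vector_derivative exp (-(w * t))) (at t within {0..T})"
    using assms
    by (intro derivative_eq_intros has_complex_derivative_imp_has_vector_derivative [unfolded o_def] | simp)+
  then have "((\<lambda>t. exp(-(w * of_real t))) has_integral (- exp (-(w * of_real T)) / w) - (- exp (-(w * of_real 0)) / w)) {0..T}"
    by (intro fundamental_theorem_of_calculus) (use assms in auto)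
  then show ?thesis using assms by (simp add: Icc_Ioc_has_integral diff_divide_distrib)
qed

lemma exp_complex_integral:
  fixes w :: complex assumes "Re w > 0"
  shows "((\<lambda>x::real. exp (-(w * of_real x))) has_integral 1/w) {0<..}"
proof (rule has_integral_dominated_convergence)
  have w0: "w \<noteq> 0" using assms by auto
  show "((\<lambda>x. if x \<in> {0<..real k} then exp (-(w * of_real x)) else 0) has_integral
        (1 - exp (-(w * of_real (real k))))/w) {0<..}" for k
    using exp_complex_integral_finite[OF w0, of "real k"] by (subst has_integral_restrict) auto
  show "(\<lambda>x. exp (-(Re w * x))) integrable_on {0<..}"
    using exp_real_integral[OF assms] by blast
  show "\<forall>x\<in>{0<..}. norm (if x \<in> {0<..real k} then exp (-(w * of_real x)) else 0) \<le> exp (-(Re w * x))" for k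
    by auto
  show "\<forall>x\<in>{0<..}. (\<lambda>k. if x \<in> {0<..real k} then exp (-(w * of_real x)) else 0) \<longlonglongrightarrow> exp (-(w * of_real x))"
  proof
    fix x :: real assume "x \<in> {0<..}"
    have "eventually (\<lambda>k. x \<le> real k) sequentially"
      by (meson eventually_sequentiallyI nat_ceiling_le_eq)
    then have "eventually (\<lambda>k. (if x \<in> {0<..real k} then exp (-(w * of_real x)) else 0) = exp (-(w * of_real x))) sequentially"
      using \<open>x \<in> {0<..}\<close> by (auto elim!: eventually_mono)
    then show "(\<lambda>k. if x \<in> {0<..real k} then exp (-(w * of_real x)) else 0) \<longlonglongrightarrow> exp (-(w * of_real x))"
      by (rule tendsto_eventually)
  qed
  show "(\<lambda>k. (1 - exp (-(w * of_real (real k))))/w) \<longlonglongrightarrow> 1/w"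
  proof -
    have "(\<lambda>k. exp (-(Re w * real k))) \<longlonglongrightarrow> 0"
      using assms by real_asymp
    then have "(\<lambda>k. exp (-(w * of_real (real k)))) \<longlonglongrightarrow> 0"
      by (subst tendsto_norm_zero_iff[symmetric]) simp
    from tendsto_diff[OF tendsto_const[of 1] this] show ?thesis using tendsto_divide[OF _ tendsto_const[of w]] w0 by force
  qed
qed

lemma poch_bound:
  fixes v :: complex
  obtains B where "B > 0" "\<And>m. m \<ge> 1 \<Longrightarrow> norm (pochhammer v (Suc m) / fact (Suc m)) \<le> B * real m powr (Re v - 1)"
proof -
  have "Bseq (rGamma_series v)" using rGamma_series_LIMSEQ[of v] by (intro convergent_imp_Bseq) (auto simp: convergent_def)
  then obtain K where K: "K > 0" "\<And>n. norm (rGamma_series v n) \<le> K" by (auto simp: Bseq_def)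
  have "norm (pochhammer v (Suc m) / fact (Suc m)) \<le> K * real m powr (Re v - 1)" if m: "m \<ge> 1" for m
  proof -
    have mpos: "real m > 0" using m by simp
    have e: "norm (exp (v * of_real (ln (real m)))) = real m powr Re v"
      using mpos by (simp add: powr_def)
    have ne: "fact m * exp (v * of_real (ln (of_nat m))) \<noteq> (0::complex)" by simp
    have "pochhammer v (Suc m) = rGamma_series v m * (fact m * exp (v * of_real (ln (of_nat m))))"
      using ne by (simp add: rGamma_series_def)
    then have "norm (pochhammer v (Suc m)) = norm (rGamma_series v m) * (fact m * real m powr Re v)"
      using e by (simp add: norm_mult)
    also have "\<dots> \<le> K * (fact m * real m powr Re v)"
      by (intro mult_right_mono K) simp
    finally have 1: "norm (pochhammer v (Suc m)) \<le> K * (fact m * real m powr Re v)" .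
    have "norm (pochhammer v (Suc m) / fact (Suc m)) = norm (pochhammer v (Suc m)) / fact (Suc m)"
      by (simp add: norm_divide del: fact_Suc)
    also have "\<dots> \<le> K * (fact m * real m powr Re v) / fact (Suc m)"
      by (intro divide_right_mono 1) simp
    also have "\<dots> = K * real m powr Re v / (real m + 1)"
    proof -
      have "(fact (Suc m) :: real) = (real m + 1) * fact m" by (simp add: fact_Suc)
      moreover have "(fact m :: real) > 0" by simp
      ultimately show ?thesis by (simp add: divide_simps)
    qed
    also have "\<dots> \<le> K * real m powr Re v / real m"
      using K mpos by (intro divide_left_mono) auto
    also have "\<dots> = K * real m powr (Re v - 1)"
      using mpos by (simp add: powr_diff)
    finally show ?thesis .
  qed
  then show ?thesis using K that by blast
qed

lemma has_integral_sum_list: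
  fixes f :: "'b \<Rightarrow> 'a::euclidean_space \<Rightarrow> 'c::banach"
  assumes "\<And>s. s \<in> set ss \<Longrightarrow> (f s has_integral I s) S"
  shows "((\<lambda>x. sum_list (map (\<lambda>s. f s x) ss)) has_integral sum_list (map I ss)) S"
  using assms
proof (induction ss)
  case Nil then show ?case by (simp add: has_integral_0)
next
  case (Cons a ss) then show ?case by (simp add: has_integral_add)
qed

lemma norm_sum_list_le:
  fixes f :: "'b \<Rightarrow> 'c::real_normed_vector"
  shows "norm (sum_list (map f ss)) \<le> sum_list (map (\<lambda>s. norm (f s)) ss)"
proof (induction ss)
  case Nil then show ?case by simp
next
  case (Cons a ss) then show ?case by (simp add: norm_triangle_le)
qed

lemma sum_list_le_len:
  fixes f :: "'b \<Rightarrow> real"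
  assumes "\<And>s. s \<in> set ss \<Longrightarrow> f s \<le> M"
  shows "sum_list (map f ss) \<le> real (length ss) * M"
  using assms
proof (induction ss)
  case Nil then show ?case by simp
next
  case (Cons a ss)
  then have "f a \<le> M" "sum_list (map f ss) \<le> real (length ss) * M" by auto
  then show ?case by (simp add: algebra_simps)
qed

lemma sum_list_nonneg':
  fixes f :: "'b \<Rightarrow> real"
  assumes "\<And>s. s \<in> set ss \<Longrightarrow> f s \<ge> 0"
  shows "sum_list (map f ss) \<ge> 0"
  using assms by (induction ss) auto

lemma series_integral:
  fixes v c K :: complex and ss :: "complex list" and F :: "real \<Rightarrow> complex"
  assumes rv: "Re v < 1" and rc: "Re c > 0" and rs: "\<And>s. s \<in> set ss \<Longrightarrow> Re (c * s) > 0"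
  defines "p \<equiv> \<lambda>n. pochhammer v n / fact n"
  defines "fn \<equiv> \<lambda>n x. K * p n * sum_list (map (\<lambda>s. exp (-((2*c*(of_nat n + s)) * of_real x))) ss)"
  defines "cn \<equiv> \<lambda>n. K * p n * sum_list (map (\<lambda>s. 1/(2*c*(of_nat n + s))) ss)"
  assumes F: "\<And>x. x > 0 \<Longrightarrow> (\<lambda>n. fn n x) sums F x"
  shows "summable cn \<and> (F has_integral suminf cn) {0<..}"
proof -
  define gn where "gn \<equiv> \<lambda>n x. norm K * norm (p n) * sum_list (map (\<lambda>s. exp (-((2*Re(c*(of_nat n + s))) * x))) ss)"
  define jn where "jn \<equiv> \<lambda>n. norm K * norm (p n) * sum_list (map (\<lambda>s. 1/(2*Re(c*(of_nat n + s)))) ss)"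
  have reW: "Re (c*(of_nat n + s)) = real n * Re c + Re (c * s)" for n s
    by (simp add: ring_distribs)
  have reWpos: "Re (c*(of_nat n + s)) > 0" if "s \<in> set ss" for n s
  proof -
    have "real n * Re c \<ge> 0" using rc by simp
    then show ?thesis using rs[OF that] unfolding reW by linarith
  qed
  have reW2: "Re (2*c*(of_nat n + s)) = 2 * Re (c*(of_nat n + s))" for n s
    by (simp add: mult.assoc)
  have fn_int: "(fn n has_integral cn n) {0<..}" for n
    unfolding fn_def cn_def
    by (intro has_integral_mult_right has_integral_sum_list exp_complex_integral)
       (use reWpos in \<open>simp add: reW2\<close>)
  have gn_int: "(gn n has_integral jn n) {0<..}" for n
    unfolding gn_def jn_def
  proof (intro has_integral_mult_right has_integral_sum_list)
    fix s assume s: "s \<in> set ss"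
    show "((\<lambda>x. exp (-((2*Re(c*(of_nat n + s))) * x))) has_integral 1/(2*Re(c*(of_nat n + s)))) {0<..}"
      by (rule exp_real_integral) (use reWpos[OF s, of n] in linarith)
  qed
  have sl_nonneg: "0 \<le> sum_list (map (\<lambda>s. 1/(2*Re(c*(of_nat n + s)))) ss)" for n
  proof (intro sum_list_nonneg')
    fix s assume s: "s \<in> set ss"
    show "0 \<le> 1/(2*Re(c*(of_nat n + s)))" using reWpos[OF s, of n] by (simp only: zero_le_divide_1_iff)
  qed
  have jn_nonneg: "jn n \<ge> 0" for n
    unfolding jn_def using sl_nonneg[of n] by simp
  have gn_nonneg: "gn n x \<ge> 0" for n x
    unfolding gn_def by (intro mult_nonneg_nonneg sum_list_nonneg') auto
  obtain B where B: "B > 0" "\<And>m. m \<ge> 1 \<Longrightarrow> norm (p (Suc m)) \<le> B * real m powr (Re v - 1)"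
    using poch_bound[of v] unfolding p_def by metis
  define B1 where "B1 = B + 1 + norm v"
  have pB1: "norm (p n) \<le> B1" for n
  proof (cases n)
    case 0 then show ?thesis using B by (simp add: p_def B1_def)
  next
    case (Suc m)
    show ?thesis
    proof (cases "m = 0")
      case True then show ?thesis using Suc B by (simp add: p_def B1_def)
    next
      case False
      then have "real m powr (Re v - 1) \<le> real m powr 0"
        using rv by (intro powr_mono) auto
      then have "real m powr (Re v - 1) \<le> 1" using False by simp
      then have "B * real m powr (Re v - 1) \<le> B" using B(1) by (simp add: mult_left_le)
      then have "norm (p n) \<le> B" using B(2)[of m] False Suc by simp
      then show ?thesis unfolding B1_def using norm_ge_zero[of v] by linarith
    qed
  qed
  define L where "L = real (length ss)"
  have jn_bound: "norm (jn (Suc m)) \<le> (norm K * B * L / (2 * Re c)) * real m powr (Re v - 2)" if m: "m \<ge> 1" for m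
  proof -
    have mpos: "real m > 0" using m by simp
    have "1/(2*Re(c*(of_nat (Suc m) + s))) \<le> 1/(2 * Re c * real m)" if "s \<in> set ss" for s
    proof -
      have "2 * Re c * real m \<le> 2*Re(c*(of_nat (Suc m) + s))"
        using rs[OF that] rc by (simp add: reW algebra_simps)
      moreover have "0 < 2 * Re c * real m" using mpos rc by simp
      ultimately show ?thesis by (intro frac_le) auto
    qed
    then have sl: "sum_list (map (\<lambda>s. 1/(2*Re(c*(of_nat (Suc m) + s)))) ss) \<le> L * (1/(2 * Re c * real m))"
      unfolding L_def by (rule sum_list_le_len)
    have "norm (jn (Suc m)) = jn (Suc m)" using jn_nonneg by simp
    also have "\<dots> \<le> norm K * (B * real m powr (Re v - 1)) * sum_list (map (\<lambda>s. 1/(2*Re(c*(of_nat (Suc m) + s)))) ss)"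
      unfolding jn_def
      by (rule mult_right_mono[OF mult_left_mono[OF B(2)[OF m] norm_ge_zero] sl_nonneg[of "Suc m"]])
    also have "\<dots> \<le> norm K * (B * real m powr (Re v - 1)) * (L * (1/(2 * Re c * real m)))"
      by (rule mult_left_mono[OF sl]) (use B(1) in simp)
    also have "\<dots> = (norm K * B * L / (2 * Re c)) * (real m powr (Re v - 1) / real m)"
      by simp
    also have "real m powr (Re v - 1) / real m = real m powr (Re v - 2)"
    proof -
      have "real m powr (Re v - 2) = real m powr (Re v - 1 - 1)" by simp
      also have "\<dots> = real m powr (Re v - 1) / real m powr 1" by (rule powr_diff)
      finally show ?thesis using mpos by (simp add: powr_one)
    qed
    finally show ?thesis .
  qed
  have "summable (\<lambda>m. (norm K * B * L / (2 * Re c)) * real m powr (Re v - 2))"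
    using rv by (intro summable_mult) (simp add: summable_real_powr_iff)
  then have "summable (\<lambda>m. jn (Suc m))"
    by (rule summable_comparison_test') (rule jn_bound)
  then have jn_sum: "summable jn" by (simp add: summable_Suc_iff)
  have cn_le: "norm (cn n) \<le> jn n" for n
  proof -
    have "norm (sum_list (map (\<lambda>s. 1/(2*c*(of_nat n + s))) ss)) \<le> sum_list (map (\<lambda>s. norm (1/(2*c*(of_nat n + s)))) ss)"
      by (rule norm_sum_list_le)
    also have "\<dots> \<le> sum_list (map (\<lambda>s. 1/(2*Re(c*(of_nat n + s)))) ss)"
    proof (rule sum_list_mono)
      fix s assume s: "s \<in> set ss"
      have "Re (2*c*(of_nat n + s)) \<le> norm (2*c*(of_nat n + s))" by (rule complex_Re_le_cmod)
      then show "norm (1/(2*c*(of_nat n + s))) \<le> 1/(2*Re(c*(of_nat n + s)))"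
        using reWpos[OF s, of n] by (simp add: reW2 norm_divide divide_simps)
    qed
    finally show ?thesis unfolding cn_def jn_def
      by (simp add: norm_mult mult_left_mono)
  qed
  have cn_sum: "summable cn"
    by (rule summable_comparison_test'[OF jn_sum]) (rule cn_le)
  have gn_sum: "summable (\<lambda>n. gn n x)" if x: "x > 0" for x
  proof -
    define q where "q = exp (-(2 * Re c * x))"
    have q: "q \<ge> 0" "q < 1" using x rc by (auto simp: q_def)
    have gle: "gn n x \<le> norm K * B1 * L * q ^ n" for n
    proof -
      have "exp (-((2*Re(c*(of_nat n + s))) * x)) \<le> q ^ n" if s: "s \<in> set ss" for s
      proof -
        have "q ^ n = exp (real n * (-(2 * Re c * x)))" unfolding q_def exp_of_nat_mult[symmetric] by simp
        moreover have "-((2*Re(c*(of_nat n + s))) * x) \<le> real n * (-(2 * Re c * x))"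
          using rs[OF s] x by (simp add: reW algebra_simps)
        ultimately show ?thesis by simp
      qed
      then have sl: "sum_list (map (\<lambda>s. exp (-((2*Re(c*(of_nat n + s))) * x))) ss) \<le> L * q ^ n"
        unfolding L_def by (rule sum_list_le_len)
      have S0: "0 \<le> sum_list (map (\<lambda>s. exp (-((2*Re(c*(of_nat n + s))) * x))) ss)"
        by (rule sum_list_nonneg') simp
      have "gn n x \<le> norm K * B1 * sum_list (map (\<lambda>s. exp (-((2*Re(c*(of_nat n + s))) * x))) ss)"
        unfolding gn_def by (rule mult_right_mono[OF mult_left_mono[OF pB1 norm_ge_zero] S0])
      also have "\<dots> \<le> norm K * B1 * (L * q ^ n)"
        by (rule mult_left_mono[OF sl]) (use B(1) in \<open>simp add: B1_def\<close>)
      finally show ?thesis by (simp add: mult.assoc)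
    qed
    have gs: "summable (\<lambda>n. norm K * B1 * L * q ^ n)"
      using q by (intro summable_mult summable_geometric) auto
    show ?thesis
    proof (rule summable_comparison_test'[OF gs])
      fix n :: nat
      show "norm (gn n x) \<le> norm K * B1 * L * q ^ n" using gle[of n] gn_nonneg[of n x] by simp
    qed
  qed
  define G where "G \<equiv> \<lambda>x. suminf (\<lambda>n. gn n x)"
  have G_int: "G integrable_on {0<..}"
  proof -
    have "G integrable_on {0<..} \<and> ((\<lambda>k. integral {0<..} (\<lambda>x. \<Sum>n<k. gn n x)) \<longlonglongrightarrow> integral {0<..} G)"
    proof (rule monotone_convergence_increasing)
      show "(\<lambda>x. \<Sum>n<k. gn n x) integrable_on {0<..}" for k
        using has_integral_sum[of "{..<k}" gn jn "{0<..}"] gn_int by blast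
      show "(\<Sum>n<k. gn n x) \<le> (\<Sum>n<Suc k. gn n x)" for k x
        using gn_nonneg by simp
      show "(\<lambda>k. \<Sum>n<k. gn n x) \<longlonglongrightarrow> G x" if "x \<in> {0<..}" for x
        unfolding G_def using gn_sum that by (intro summable_LIMSEQ) auto
      have "integral {0<..} (\<lambda>x. \<Sum>n<k. gn n x) = (\<Sum>n<k. jn n)" for k
        using has_integral_sum[of "{..<k}" gn jn "{0<..}"] gn_int by (simp add: integral_unique)
      moreover have "(\<Sum>n<k. jn n) \<le> suminf jn" for k
        using jn_sum jn_nonneg by (intro sum_le_suminf) auto
      ultimately show "bounded (range (\<lambda>k. integral {0<..} (\<lambda>x. \<Sum>n<k. gn n x)))"
        using jn_nonneg by (intro boundedI[where B="suminf jn"]) (auto simp: sum_nonneg)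
    qed
    then show ?thesis by blast
  qed
  have "(F has_integral suminf cn) {0<..}"
  proof (rule has_integral_dominated_convergence)
    show "((\<lambda>x. \<Sum>n<k. fn n x) has_integral (\<Sum>n<k. cn n)) {0<..}" for k
      using has_integral_sum[of "{..<k}" fn cn "{0<..}"] fn_int by blast
    show "G integrable_on {0<..}" by (rule G_int)
    show "\<forall>x\<in>{0<..}. norm (\<Sum>n<k. fn n x) \<le> G x" for k
    proof
      fix x :: real assume "x \<in> {0<..}"
      then have x: "x > 0" by simp
      have "norm (fn n x) \<le> gn n x" for n
      proof -
        have "norm (sum_list (map (\<lambda>s. exp (-((2*c*(of_nat n + s)) * of_real x))) ss))
              \<le> sum_list (map (\<lambda>s. norm (exp (-((2*c*(of_nat n + s)) * of_real x)))) ss)"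
          by (rule norm_sum_list_le)
        also have "sum_list (map (\<lambda>s. norm (exp (-((2*c*(of_nat n + s)) * of_real x)))) ss)
              = sum_list (map (\<lambda>s. exp (-((2*Re(c*(of_nat n + s))) * x))) ss)"
          by (intro arg_cong[where f=sum_list] map_cong refl) (simp add: reW2[symmetric])
        finally show ?thesis unfolding fn_def gn_def
          by (simp add: norm_mult mult_left_mono)
      qed
      note fle = this
      have "norm (\<Sum>n<k. fn n x) \<le> (\<Sum>n<k. norm (fn n x))" by (rule norm_sum)
      also have "\<dots> \<le> (\<Sum>n<k. gn n x)" by (rule sum_mono) (rule fle)
      also have "\<dots> \<le> G x" unfolding G_def
        using gn_sum[OF x] gn_nonneg by (intro sum_le_suminf) auto
      finally show "norm (\<Sum>n<k. fn n x) \<le> G x" .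
    qed
    show "\<forall>x\<in>{0<..}. (\<lambda>k. \<Sum>n<k. fn n x) \<longlonglongrightarrow> F x"
      using F by (auto simp: sums_def)
    show "(\<lambda>k. \<Sum>n<k. cn n) \<longlonglongrightarrow> suminf cn"
      using cn_sum by (rule summable_LIMSEQ)
  qed
  then show ?thesis using cn_sum by blast
qed



lemma exp_term:
  fixes c v al be s :: complex and X :: complex and n :: nat
  assumes "c \<noteq> 0" "2 * c * s = v * c - al - be"
  shows "exp (al * X) * exp (be * X) * exp (-(v * c * X)) * exp (-2 * c * X) ^ n
         = exp (-((2*c*(of_nat n + s)) * X))"
proof -
  have "-((2*c*(of_nat n + s)) * X) = al * X + be * X + (-(v * c * X)) + of_nat n * (-2 * c * X)"
    using assms(2) by (simp add: algebra_simps) (metis (no_types, lifting) assms(2) mult.assoc mult.left_commute ring_class.ring_distribs(1) ring_class.ring_distribs(2) uminus_add_conv_diff)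
  then show ?thesis by (simp only: exp_add exp_of_nat_mult)
qed

lemma combine4:
  fixes a b X K W z P e3 e4 e5 e6 :: complex
  assumes e3: "exp (a * X) * exp (b * X) * W * z = e3"
    and e4: "exp (a * X) * exp ((-b) * X) * W * z = e4"
    and e5: "exp ((-a) * X) * exp ((-b) * X) * W * z = e5"
    and e6: "exp ((-a) * X) * exp (b * X) * W * z = e6"
  shows "(K * W * (cosh (a * X) * cosh (b * X))) * (P * z) = K / 4 * P * sum_list (map id [e3, e4, e5, e6])"
  unfolding e3[symmetric] e4[symmetric] e5[symmetric] e6[symmetric] cosh_field_def
  by (simp add: algebra_simps)

lemma pointwise_expansion:
  fixes v a b c :: complex and x :: real
  assumes rc: "Re c > 0" and x: "x > 0"
  defines "s3 \<equiv> v/2 - a/(2*c) - b/(2*c)" and "s4 \<equiv> v/2 - a/(2*c) + b/(2*c)"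
      and "s5 \<equiv> v/2 + a/(2*c) + b/(2*c)" and "s6 \<equiv> v/2 + a/(2*c) - b/(2*c)"
  shows "(\<lambda>n. (2 powr v / 4) * (pochhammer v n / fact n) *
            sum_list (map (\<lambda>s. exp (-((2*c*(of_nat n + s)) * of_real x))) [s3, s4, s5, s6]))
         sums (cosh (a * of_real x) * cosh (b * of_real x) / sinh_pow v c x)"
proof -
  have c0: "c \<noteq> 0" using rc by auto
  define X where "X = (of_real x :: complex)"
  define z where "z = exp (-2 * c * X)"
  have nz: "norm (-z) < 1" using rc x by (simp add: z_def X_def)
  have bin: "(\<lambda>n. ((-v) gchoose n) * (-z)^n) sums (1 + -z) powr (-v)"
    by (rule gen_binomial_complex[OF nz])
  have teq: "((-v) gchoose n) * (-z)^n = pochhammer v n / fact n * z^n" for n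
  proof -
    have "((-v) gchoose n) * (-z)^n = ((-1)^n * pochhammer v n / fact n) * ((-1)^n * z^n)"
      by (subst power_minus[of z]) (simp add: gbinomial_pochhammer)
    also have "\<dots> = ((-1)^n * (-1)^n) * (pochhammer v n / fact n * z^n)"
      by (simp add: algebra_simps)
    also have "(-1::complex)^n * (-1)^n = 1" by (simp flip: power_add)
    finally show ?thesis by simp
  qed
  have bin2: "(\<lambda>n. pochhammer v n / fact n * z^n) sums (1 - z) powr (-v)"
    using bin teq by simp
  define C where "C = 2 powr v * exp (-(v * c * X)) * (cosh (a * X) * cosh (b * X))"
  have S1: "(\<lambda>n. C * (pochhammer v n / fact n * z^n)) sums (C * (1 - z) powr (-v))"
    by (rule sums_mult[OF bin2])
  have E1: "C * (1 - z) powr (-v) = cosh (a * of_real x) * cosh (b * of_real x) / sinh_pow v c x"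
  proof -
    have inv: "inverse (sinh_pow v c x) = 2 powr v * exp (-(v * c * X)) * (1-z) powr (-v)"
      unfolding sinh_pow_def z_def X_def by (simp add: powr_minus exp_minus)
    show ?thesis unfolding divide_inverse inv unfolding C_def X_def by (simp add: mult_ac)
  qed
  have E2: "C * (pochhammer v n / fact n * z^n) =
     (2 powr v / 4) * (pochhammer v n / fact n) *
            sum_list (map (\<lambda>s. exp (-((2*c*(of_nat n + s)) * of_real x))) [s3, s4, s5, s6])" for n
  proof -
    have e3: "exp (a * X) * exp (b * X) * exp (-(v * c * X)) * z ^ n = exp (-((2*c*(of_nat n + s3)) * X))"
      unfolding z_def by (rule exp_term[OF c0]) (use c0 in \<open>simp add: s3_def field_simps\<close>)
    have e4: "exp (a * X) * exp ((-b) * X) * exp (-(v * c * X)) * z ^ n = exp (-((2*c*(of_nat n + s4)) * X))"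
      unfolding z_def by (rule exp_term[OF c0]) (use c0 in \<open>simp add: s4_def field_simps\<close>)
    have e5: "exp ((-a) * X) * exp ((-b) * X) * exp (-(v * c * X)) * z ^ n = exp (-((2*c*(of_nat n + s5)) * X))"
      unfolding z_def by (rule exp_term[OF c0]) (use c0 in \<open>simp add: s5_def field_simps\<close>)
    have e6: "exp ((-a) * X) * exp (b * X) * exp (-(v * c * X)) * z ^ n = exp (-((2*c*(of_nat n + s6)) * X))"
      unfolding z_def by (rule exp_term[OF c0]) (use c0 in \<open>simp add: s6_def field_simps\<close>)
    have "C * (pochhammer v n / fact n * z^n) = 2 powr v / 4 * (pochhammer v n / fact n) *
       sum_list (map id [exp (-((2*c*(of_nat n + s3)) * X)), exp (-((2*c*(of_nat n + s4)) * X)),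
                         exp (-((2*c*(of_nat n + s5)) * X)), exp (-((2*c*(of_nat n + s6)) * X))])"
      unfolding C_def by (rule combine4[OF e3 e4 e5 e6])
    then show ?thesis by (simp add: X_def)
  qed
  have E3: "(\<lambda>n. C * (pochhammer v n / fact n * z^n)) = (\<lambda>n. (2 powr v / 4) * (pochhammer v n / fact n) *
            sum_list (map (\<lambda>s. exp (-((2*c*(of_nat n + s)) * of_real x))) [s3, s4, s5, s6]))"
    by (rule ext) (rule E2)
  show ?thesis using S1 unfolding E3 E1 .
qed



lemma poch_nz: fixes x :: complex assumes "x \<notin> \<int>\<^sub>\<le>\<^sub>0" shows "pochhammer x n \<noteq> 0"
  using assms by (auto simp: pochhammer_eq_0_iff)

lemma poch_shift: fixes x :: complex assumes "x \<noteq> 0"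
  shows "pochhammer (1 + x) n = (x + of_nat n) / x * pochhammer x n"
proof -
  have "x * pochhammer (x + 1) n = (x + of_nat n) * pochhammer x n"
    using pochhammer_rec[of x n] pochhammer_rec'[of x n] by simp
  then show ?thesis using assms by (simp add: field_simps add.commute)
qed

lemma partial_frac:
  fixes t A B S :: complex
  assumes "S^2 = A^2 + B^2"
  shows "(t-A+B) * (t+A+B) * (t+A-B) + (t-A-B) * (t+A+B) * (t+A-B)
       + (t-A-B) * (t-A+B) * (t+A-B) + (t-A-B) * (t-A+B) * (t+A+B)
       = 4 * t * (t-S) * (t+S)"
proof -
  have L: "(t-A+B) * (t+A+B) * (t+A-B) + (t-A-B) * (t+A+B) * (t+A-B)
       + (t-A-B) * (t-A+B) * (t+A-B) + (t-A-B) * (t-A+B) * (t+A+B) = 4 * t * (t^2 - (A^2 + B^2))"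
    by (simp add: power2_eq_square algebra_simps)
  have R: "4 * t * (t-S) * (t+S) = 4 * t * (t^2 - S^2)"
    by (simp add: power2_eq_square algebra_simps)
  show ?thesis unfolding L R assms ..
qed

lemma sum_frac:
  fixes c w3 w4 w5 w6 :: complex
  assumes "c \<noteq> 0" "w3 \<noteq> 0" "w4 \<noteq> 0" "w5 \<noteq> 0" "w6 \<noteq> 0"
  shows "1/(2 * c * w3) + (1/(2 * c * w4) + (1/(2 * c * w5) + (1/(2 * c * w6) + 0))) =
     (w4 * w5 * w6 + w3 * w5 * w6 + w3 * w4 * w6 + w3 * w4 * w5) / (2 * c * (w3 * w4 * w5 * w6))"
  using assms by (simp add: field_simps)

lemma ratio_alg:
  fixes pv ph p1 p2 q3 q4 q5 q6 h l1 l2 s3 s4 s5 s6 H L1 L2 u3 u4 u5 u6 F :: complex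
  assumes "ph \<noteq> 0" "p1 \<noteq> 0" "p2 \<noteq> 0" "q3 \<noteq> 0" "q4 \<noteq> 0" "q5 \<noteq> 0" "q6 \<noteq> 0"
    "h \<noteq> 0" "l1 \<noteq> 0" "l2 \<noteq> 0" "s3 \<noteq> 0" "s4 \<noteq> 0" "s5 \<noteq> 0" "s6 \<noteq> 0"
    "u3 \<noteq> 0" "u4 \<noteq> 0" "u5 \<noteq> 0" "u6 \<noteq> 0" "F \<noteq> 0"
  shows "pv * (H/h * ph) * (L1/l1 * p1) * (L2/l2 * p2) * q3 * q4 * q5 * q6 /
           (ph * p1 * p2 * (u3/s3 * q3) * (u4/s4 * q4) * (u5/s5 * q5) * (u6/s6 * q6)) / F
       = pv / F * (H * L1 * L2 * (s3 * s4 * s5 * s6) / (h * l1 * l2 * (u3 * u4 * u5 * u6)))"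
  using assms by (simp add: field_simps)


lemma final_alg:
  fixes p H L1 L2 Q h l1 l2 U c T :: complex
  assumes "h \<noteq> 0" "l1 \<noteq> 0" "l2 \<noteq> 0" "U \<noteq> 0" "c \<noteq> 0" "T \<noteq> 0"
  shows "p * (H * L1 * L2 * Q / (h * l1 * l2 * U)) =
         (2 * c * Q / (T * (h * (l1 * l2)))) * (T / 4 * p * (4 * H * L1 * L2 / (2 * c * U)))"
  using assms by (simp add: field_simps)

lemma const_alg:
  fixes v a b c s T :: complex
  assumes c0: "c \<noteq> 0" and v0: "v \<noteq> 0" and X0: "v^2 * c^2 - a^2 - b^2 \<noteq> 0" and T0: "T \<noteq> 0"
    and P0: "(v * c - a - b) * (v * c + a + b) * (v * c - a + b) * (v * c + a - b) \<noteq> 0"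
    and ss: "s^2 = a^2 + b^2"
  shows "T * (v^3 * c^3 - a^2 * v * c - b^2 * v * c) / ((v * c - a - b) * (v * c + a + b) * (v * c - a + b) * (v * c + a - b))
     * (2 * c * ((v/2 - a/(2 * c) - b/(2 * c)) * (v/2 - a/(2 * c) + b/(2 * c)) * (v/2 + a/(2 * c) + b/(2 * c)) * (v/2 + a/(2 * c) - b/(2 * c)))
        / (T * (v/2 * ((v/2 - s/(2 * c)) * (v/2 + s/(2 * c)))))) = 1"
proof -
  define P where "P = (v * c - a - b) * (v * c + a + b) * (v * c - a + b) * (v * c + a - b)"
  define X where "X = v^2 * c^2 - a^2 - b^2"
  have hQ: "(v/2 - a/(2 * c) - b/(2 * c)) * (v/2 - a/(2 * c) + b/(2 * c)) * (v/2 + a/(2 * c) + b/(2 * c)) * (v/2 + a/(2 * c) - b/(2 * c)) = P / (16 * c^4)"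
  proof -
    have e1: "v/2 - a/(2 * c) - b/(2 * c) = (v * c - a - b) / (2 * c)" using c0 by (simp add: field_simps)
    have e2: "v/2 - a/(2 * c) + b/(2 * c) = (v * c - a + b) / (2 * c)" using c0 by (simp add: field_simps)
    have e3: "v/2 + a/(2 * c) + b/(2 * c) = (v * c + a + b) / (2 * c)" using c0 by (simp add: field_simps)
    have e4: "v/2 + a/(2 * c) - b/(2 * c) = (v * c + a - b) / (2 * c)" using c0 by (simp add: field_simps)
    show ?thesis unfolding e1 e2 e3 e4 P_def using c0 by (simp add: field_simps) (simp add: power4_eq_xxxx mult_ac)
  qed
  have hL: "(v/2 - s/(2 * c)) * (v/2 + s/(2 * c)) = X / (4 * c^2)"
  proof -
    have "(v/2 - s/(2 * c)) * (v/2 + s/(2 * c)) = (v^2 * c^2 - s^2) / (4 * c^2)"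
      using c0 by (simp add: field_simps power2_eq_square)
    then show ?thesis unfolding X_def ss by (simp add: algebra_simps)
  qed
  have hN: "v^3 * c^3 - a^2 * v * c - b^2 * v * c = v * c * X"
    unfolding X_def by (simp add: algebra_simps power2_eq_square power3_eq_cube)
  have X0': "X \<noteq> 0" using X0 X_def by simp
  have P0': "P \<noteq> 0" using P0 P_def by simp
  show ?thesis unfolding hQ hL hN P_def[symmetric]
    using c0 v0 T0 P0' X0' by (simp add: field_simps power4_eq_xxxx power2_eq_square)
qed



lemma sum_full:
  fixes N v A B S c :: complex
  assumes c0: "c \<noteq> 0" and SS: "S^2 = A^2 + B^2"
    and n3: "N + (v/2 - A - B) \<noteq> 0" and n4: "N + (v/2 - A + B) \<noteq> 0"
    and n5: "N + (v/2 + A + B) \<noteq> 0" and n6: "N + (v/2 + A - B) \<noteq> 0"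
  shows "1/(2 * c * (N + (v/2 - A - B))) + (1/(2 * c * (N + (v/2 - A + B))) + (1/(2 * c * (N + (v/2 + A + B))) + (1/(2 * c * (N + (v/2 + A - B))) + 0)))
    = 4 * (v/2 + N) * ((v/2 - S) + N) * ((v/2 + S) + N) /
      (2 * c * (((v/2 - A - B) + N) * ((v/2 - A + B) + N) * ((v/2 + A + B) + N) * ((v/2 + A - B) + N)))"
proof -
  define t where "t = N + v/2"
  have e3: "N + (v/2 - A - B) = t - A - B" "(v/2 - A - B) + N = t - A - B" unfolding t_def by (simp_all add: algebra_simps)
  have e4: "N + (v/2 - A + B) = t - A + B" "(v/2 - A + B) + N = t - A + B" unfolding t_def by (simp_all add: algebra_simps)
  have e5: "N + (v/2 + A + B) = t + A + B" "(v/2 + A + B) + N = t + A + B" unfolding t_def by (simp_all add: algebra_simps)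
  have e6: "N + (v/2 + A - B) = t + A - B" "(v/2 + A - B) + N = t + A - B" unfolding t_def by (simp_all add: algebra_simps)
  have e7: "v/2 + N = t" "(v/2 - S) + N = t - S" "(v/2 + S) + N = t + S" unfolding t_def by (simp_all add: algebra_simps)
  have nz: "t - A - B \<noteq> 0" "t - A + B \<noteq> 0" "t + A + B \<noteq> 0" "t + A - B \<noteq> 0"
    using n3 n4 n5 n6 e3 e4 e5 e6 by auto
  show ?thesis unfolding e3 e4 e5 e6 e7
    unfolding sum_frac[OF c0 nz] partial_frac[OF SS] ..
qed

lemma not_nonpos_of_Re:
  fixes c s :: complex assumes "Re c > 0" "Re (c * s) > 0"
  shows "s \<notin> \<int>\<^sub>\<le>\<^sub>0" and "of_nat n + s \<noteq> 0" and "s \<noteq> 0"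
proof -
  show "s \<notin> \<int>\<^sub>\<le>\<^sub>0"
  proof
    assume "s \<in> \<int>\<^sub>\<le>\<^sub>0"
    then obtain k where "s = - of_nat k" by (auto elim!: nonpos_Ints_cases')
    then have "Re (c * s) = - (Re c * real k)" by simp
    moreover have "Re c * real k \<ge> 0" using assms(1) by simp
    ultimately show False using assms(2) by linarith
  qed
  show "of_nat n + s \<noteq> 0"
  proof
    assume "of_nat n + s = 0"
    then have "s = - of_nat n" by (simp add: eq_neg_iff_add_eq_0 add.commute)
    then have "Re (c * s) = - (Re c * real n)" by simp
    moreover have "Re c * real n \<ge> 0" using assms(1) by simp
    ultimately show False using assms(2) by linarith
  qed
  show "s \<noteq> 0" using assms by auto
qed

theorem mainTheorem18:
  fixes v a b c s :: complex
  assumes "Re v < 1" and "Re c > 0"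
    and "Re (v *c + a + b) > 0" and "Re (v *c + a - b) > 0"
    and "Re (v *c - a + b) > 0" and "Re (v *c - a - b) > 0"
    and "s\<^sup>2 = a\<^sup>2 + b\<^sup>2"
    and "v/2 \<notin> \<int>\<^sub>\<le>\<^sub>0"
    and "v/2 - s/(2*c) \<notin> \<int>\<^sub>\<le>\<^sub>0"
    and "v/2 + s/(2*c) \<notin> \<int>\<^sub>\<le>\<^sub>0"
    and "1 + (v/2 - a/(2*c) - b/(2*c)) \<notin> \<int>\<^sub>\<le>\<^sub>0"
    and "1 + (v/2 - a/(2*c) + b/(2*c)) \<notin> \<int>\<^sub>\<le>\<^sub>0"
    and "1 + (v/2 + a/(2*c) + b/(2*c)) \<notin> \<int>\<^sub>\<le>\<^sub>0"
    and "1 + (v/2 + a/(2*c) - b/(2*c)) \<notin> \<int>\<^sub>\<le>\<^sub>0"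
  shows "let l1 = v/2 - s/(2*c); l2 = v/2 + s/(2*c);
             s3 = v/2 - a/(2*c) - b/(2*c); s4 = v/2 - a/(2*c) + b/(2*c);
             s5 = v/2 + a/(2*c) + b/(2*c); s6 = v/2 + a/(2*c) - b/(2*c);
             P = (v *c - a - b) * (v *c + a + b) * (v *c - a + b) * (v *c + a - b);
             as = [v, 1 + v/2, 1 + l1, 1 + l2, s3, s4, s5, s6];
             bs = [v/2, l1, l2, 1 + s3, 1 + s4, 1 + s5, 1 + s6]
         in summable (hyp_term as bs 1) \<and>
            ((\<lambda>x::real. cosh (a * of_real x) * cosh (b * of_real x) / sinh_pow v c x)
               has_integral
               ((2::complex) powr v * (v^3 * c^3 - a\<^sup>2 * v * c - b\<^sup>2 * v * c) / P * hypergeomF as bs 1))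
              {0<..}"
proof -
  note rv = assms(1) and rc = assms(2)
  have c0: "c \<noteq> 0" using rc by auto
  define l1 where "l1 = v/2 - s/(2 * c)"
  define l2 where "l2 = v/2 + s/(2 * c)"
  define s3 where "s3 = v/2 - a/(2 * c) - b/(2 * c)"
  define s4 where "s4 = v/2 - a/(2 * c) + b/(2 * c)"
  define s5 where "s5 = v/2 + a/(2 * c) + b/(2 * c)"
  define s6 where "s6 = v/2 + a/(2 * c) - b/(2 * c)"
  define P where "P = (v * c - a - b) * (v * c + a + b) * (v * c - a + b) * (v * c + a - b)"
  define asL where "asL = [v, 1 + v/2, 1 + l1, 1 + l2, s3, s4, s5, s6]"
  define bsL where "bsL = [v/2, l1, l2, 1 + s3, 1 + s4, 1 + s5, 1 + s6]"
  define F where "F = (\<lambda>x::real. cosh (a * of_real x) * cosh (b * of_real x) / sinh_pow v c x)"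
  define K where "K = (2::complex) powr v / 4"
  define cn where "cn = (\<lambda>n. K * (pochhammer v n / fact n) * sum_list (map (\<lambda>s. 1/(2 * c * (of_nat n + s))) [s3, s4, s5, s6]))"
  have cs3: "c * s3 = (v * c - a - b) / 2" unfolding s3_def using c0 by (simp add: field_simps)
  have cs4: "c * s4 = (v * c - a + b) / 2" unfolding s4_def using c0 by (simp add: field_simps)
  have cs5: "c * s5 = (v * c + a + b) / 2" unfolding s5_def using c0 by (simp add: field_simps)
  have cs6: "c * s6 = (v * c + a - b) / 2" unfolding s6_def using c0 by (simp add: field_simps)
  have r3: "Re (c * s3) > 0" using assms(6) unfolding cs3 by (simp only: Re_divide_numeral)
  have r4: "Re (c * s4) > 0" using assms(5) unfolding cs4 by (simp only: Re_divide_numeral)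
  have r5: "Re (c * s5) > 0" using assms(3) unfolding cs5 by (simp only: Re_divide_numeral)
  have r6: "Re (c * s6) > 0" using assms(4) unfolding cs6 by (simp only: Re_divide_numeral)
  have rs: "Re (c * s) > 0" if "s \<in> set [s3, s4, s5, s6]" for s
    using that r3 r4 r5 r6 by auto
  have SI: "summable cn \<and> (F has_integral suminf cn) {0<..}"
    unfolding cn_def
  proof (rule series_integral[OF rv rc rs])
    fix x :: real assume "x > 0"
    show "(\<lambda>n. K * (pochhammer v n / fact n) *
          sum_list (map (\<lambda>s. exp (-((2 * c * (of_nat n + s)) * of_real x))) [s3, s4, s5, s6])) sums F x"
      unfolding K_def F_def s3_def s4_def s5_def s6_def
      by (rule pointwise_expansion[OF rc \<open>x > 0\<close>])
  qed
  define M where "M = 2 * c * (s3 * s4 * s5 * s6) / (2 powr v * (v/2 * (l1 * l2)))"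
  have T0: "(2::complex) powr v \<noteq> 0" by (simp add: powr_def)
  have h0: "v/2 \<noteq> 0" using assms(8) by auto
  have v0: "v \<noteq> 0" using h0 by simp
  have l10: "l1 \<noteq> 0" using assms(9) unfolding l1_def by auto
  have l20: "l2 \<noteq> 0" using assms(10) unfolding l2_def by auto
  note nn3 = not_nonpos_of_Re[OF rc r3] and nn4 = not_nonpos_of_Re[OF rc r4]
    and nn5 = not_nonpos_of_Re[OF rc r5] and nn6 = not_nonpos_of_Re[OF rc r6]
  have ph0: "pochhammer (v/2) n \<noteq> 0" for n using poch_nz[OF assms(8)] .
  have p10: "pochhammer l1 n \<noteq> 0" for n using poch_nz[OF assms(9)] unfolding l1_def .
  have p20: "pochhammer l2 n \<noteq> 0" for n using poch_nz[OF assms(10)] unfolding l2_def .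
  have SS: "(s/(2 * c))^2 = (a/(2 * c))^2 + (b/(2 * c))^2"
    using assms(7) c0 by (simp add: power_divide add_divide_distrib)
  have hterm: "hyp_term asL bsL 1 n = M * cn n" for n
  proof -
    define N where "N = (of_nat n :: complex)"
    have hexp: "hyp_term asL bsL 1 n =
      pochhammer v n * ((v/2 + N)/(v/2) * pochhammer (v/2) n) * ((l1 + N)/l1 * pochhammer l1 n) * ((l2 + N)/l2 * pochhammer l2 n)
      * pochhammer s3 n * pochhammer s4 n * pochhammer s5 n * pochhammer s6 n /
      (pochhammer (v/2) n * pochhammer l1 n * pochhammer l2 n * ((s3 + N)/s3 * pochhammer s3 n) * ((s4 + N)/s4 * pochhammer s4 n)
        * ((s5 + N)/s5 * pochhammer s5 n) * ((s6 + N)/s6 * pochhammer s6 n)) / fact n"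
      unfolding hyp_term_def asL_def bsL_def N_def
      by (simp add: mult.assoc poch_shift[OF h0] poch_shift[OF l10] poch_shift[OF l20]
        poch_shift[OF nn3(3)] poch_shift[OF nn4(3)] poch_shift[OF nn5(3)] poch_shift[OF nn6(3)])
    have hr: "hyp_term asL bsL 1 n = pochhammer v n / fact n *
       ((v/2 + N) * (l1 + N) * (l2 + N) * (s3 * s4 * s5 * s6) / (v/2 * l1 * l2 * ((s3 + N) * (s4 + N) * (s5 + N) * (s6 + N))))"
      unfolding hexp
      by (rule ratio_alg) (use ph0 p10 p20 poch_nz nn3 nn4 nn5 nn6 h0 l10 l20 in \<open>auto simp: N_def add.commute\<close>)
    have hs: "sum_list (map (\<lambda>s. 1/(2 * c * (of_nat n + s))) [s3, s4, s5, s6]) =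
       4 * (v/2 + N) * (l1 + N) * (l2 + N) / (2 * c * ((s3 + N) * (s4 + N) * (s5 + N) * (s6 + N)))"
      unfolding N_def[symmetric] list.map sum_list_simps s3_def s4_def s5_def s6_def l1_def l2_def
      by (rule sum_full[OF c0 SS]) (use nn3 nn4 nn5 nn6 in \<open>auto simp: N_def s3_def s4_def s5_def s6_def\<close>)
    have U0: "(s3 + N) * (s4 + N) * (s5 + N) * (s6 + N) \<noteq> 0"
      using nn3(2) nn4(2) nn5(2) nn6(2) by (auto simp: N_def add.commute)
    show ?thesis unfolding hr cn_def hs M_def K_def
      by (rule final_alg[OF h0 l10 l20 U0 c0 T0])
  qed
  have hyp_eq: "hyp_term asL bsL 1 = (\<lambda>n. M * cn n)" using hterm by (rule ext)
  have sumH: "summable (hyp_term asL bsL 1)"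
    unfolding hyp_eq using SI by (intro summable_mult) auto
  have HF: "hypergeomF asL bsL 1 = M * suminf cn"
    unfolding hypergeomF_def hyp_eq using SI by (intro suminf_mult) auto
  have X0: "v^2 * c^2 - a^2 - b^2 \<noteq> 0"
  proof
    assume X: "v^2 * c^2 - a^2 - b^2 = 0"
    have "l1 * l2 = (v^2 * c^2 - s^2) / (4 * c^2)"
      unfolding l1_def l2_def using c0 by (simp add: field_simps power2_eq_square)
    also have "v^2 * c^2 - s^2 = v^2 * c^2 - a^2 - b^2" using assms(7) by (simp add: algebra_simps)
    also have "\<dots> = 0" by (rule X)
    finally show False using l10 l20 by simp
  qed
  have P0: "P \<noteq> 0"
  proof -
    have nzRe: "x \<noteq> 0" if "Re x > 0" for x :: complex using that by auto
    have "v * c - a - b \<noteq> 0" "v * c + a + b \<noteq> 0" "v * c - a + b \<noteq> 0" "v * c + a - b \<noteq> 0"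
      using nzRe[OF assms(6)] nzRe[OF assms(3)] nzRe[OF assms(5)] nzRe[OF assms(4)] by auto
    then show ?thesis unfolding P_def by simp
  qed
  have const: "2 powr v * (v^3 * c^3 - a\<^sup>2 * v * c - b\<^sup>2 * v * c) / P * M = 1"
    unfolding P_def M_def s3_def s4_def s5_def s6_def l1_def l2_def
    by (rule const_alg[OF c0 v0 X0 T0 P0[unfolded P_def] assms(7)])
  have R: "summable (hyp_term asL bsL 1) \<and>
      (F has_integral (2 powr v * (v^3 * c^3 - a\<^sup>2 * v * c - b\<^sup>2 * v * c) / P * hypergeomF asL bsL 1)) {0<..}"
  proof
    show "summable (hyp_term asL bsL 1)" by (rule sumH)
    have "2 powr v * (v^3 * c^3 - a\<^sup>2 * v * c - b\<^sup>2 * v * c) / P * hypergeomF asL bsL 1 = suminf cn"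
      unfolding HF using const by (metis mult.assoc mult_1)
    then show "(F has_integral (2 powr v * (v^3 * c^3 - a\<^sup>2 * v * c - b\<^sup>2 * v * c) / P * hypergeomF asL bsL 1)) {0<..}"
      using SI by simp
  qed
  show ?thesis
    using R unfolding Let_def F_def asL_def bsL_def P_def l1_def l2_def s3_def s4_def s5_def s6_def .
qed


end
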